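(* Let $\Bbbk$ be a field of characteristic zero. For $n\in\mathbb Z$ let $\mathcal F_n\mathcal O=\mathrm{span}\{\mathcal U_k\mid k\ge n,\ k\ge-1\}$ and $\mathcal F_n\mathcal P=\mathrm{span}\{\mathcal V_k\mid k\ge n,\ k\ge -1\}$. Then $[\mathcal F_n\mathcal O,\mathcal F_m\mathcal P]\subseteq\mathcal F_{n+m}\mathcal P$ for all $n,m\in\mathbb Z$. Consequently, setting $\mathcal F_n\mathfrak b=\mathcal F_n\mathcal O\ltimes\mathcal F_n\mathcal P=\mathrm{span}\{\mathcal U_k,\mathcal V_k\mid k\ge n,\ k\ge-1\}$, one has $[\mathcal F_n\mathfrak b,\mathcal F_m\mathfrak b]\subseteq\mathcal F_{n+m}\mathfrak b$ for all $n,m$, and $\mathfrak b=\mathcal F_{-1}\mathfrak b\supseteq\mathcal F_0\mathfrak b\supseteq\mathcal F_1\mathfrak b\supseteq\cdots$, so $\mathcal F$ is a filtration of $\mathfrak b$.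
   Context: The centreless BCCA $\mathfrak b=\mathcal O\ltimes\mathcal P$ has a basis $\{u_n,v_m\mid n\ge1,m\ge0\}$ with $[u_n,u_m]=(n-m)(u_{n+m}-4u_{n+m-2})$, $[u_n,v_m]=(n-m)v_{n+m}-4(n-m-1)v_{n+m-2}$, $[v_n,v_m]=0$, where $\mathcal O=\mathrm{span}\{u_n\}$ and $\mathcal P=\mathrm{span}\{v_m\}$. Set $\mathcal U_n=u_{n+2}$ and $\mathcal V_n=v_{n+1}$ for $n\ge-1$. *)

theory Defs
  imports Main
begin

text \<open>Basis of the centreless BCCA b, in the shifted indexing of the paper:
  U k = u_(k+2) and V k = v_(k+1), for k >= -1.  Elements of b are
  finitely supported coefficient functions on this basis.\<close>

datatype basis = U int | V int

definition valid :: "basis \<Rightarrow> bool" where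
  "valid b = (case b of U k \<Rightarrow> k \<ge> -1 | V k \<Rightarrow> k \<ge> -1)"

definition e :: "basis \<Rightarrow> basis \<Rightarrow> 'k::field" where
  "e b = (\<lambda>c. if c = b then 1 else 0)"

definition lin_span :: "(basis \<Rightarrow> 'k::field) set \<Rightarrow> (basis \<Rightarrow> 'k) set" where
  "lin_span S = {x. \<exists>A c. finite A \<and> A \<subseteq> S \<and> x = (\<lambda>b. \<Sum>a\<in>A. c a * a b)}"

definition uu :: "int \<Rightarrow> basis \<Rightarrow> 'k::field" where "uu n = e (U (n - 2))"
definition vv :: "int \<Rightarrow> basis \<Rightarrow> 'k::field" where "vv m = e (V (m - 1))"

text \<open>Structure constants: coefficient of basis vector c in [a,b], following
  [u_n,u_m] = (n-m)(u_(n+m) - 4 u_(n+m-2)),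
  [u_n,v_m] = (n-m) v_(n+m) - 4(n-m-1) v_(n+m-2), [v_n,v_m] = 0.\<close>
fun sc :: "basis \<Rightarrow> basis \<Rightarrow> basis \<Rightarrow> 'k::field" where
  "sc (U a) (U b) c = (let n = a + 2; m = b + 2 in
      of_int (n - m) * uu (n + m) c - 4 * of_int (n - m) * uu (n + m - 2) c)"
| "sc (U a) (V b) c = (let n = a + 2; m = b + 1 in
      of_int (n - m) * vv (n + m) c - 4 * of_int (n - m - 1) * vv (n + m - 2) c)"
| "sc (V a) (U b) c = (let n = b + 2; m = a + 1 in
      - (of_int (n - m) * vv (n + m) c - 4 * of_int (n - m - 1) * vv (n + m - 2) c))"
| "sc (V a) (V b) c = 0"

definition supp :: "(basis \<Rightarrow> 'k::field) \<Rightarrow> basis set" where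
  "supp x = {b. x b \<noteq> 0}"

definition brk :: "(basis \<Rightarrow> 'k::field) \<Rightarrow> (basis \<Rightarrow> 'k) \<Rightarrow> (basis \<Rightarrow> 'k)" where
  "brk x y = (\<lambda>c. \<Sum>a\<in>supp x. \<Sum>b\<in>supp y. x a * y b * sc a b c)"

definition bcca :: "(basis \<Rightarrow> 'k::field) set" where
  "bcca = lin_span {e b | b. valid b}"

definition FO :: "int \<Rightarrow> (basis \<Rightarrow> 'k::field) set" where
  "FO n = lin_span {e (U k) | k. k \<ge> n \<and> k \<ge> -1}"

definition FP :: "int \<Rightarrow> (basis \<Rightarrow> 'k::field) set" where
  "FP n = lin_span {e (V k) | k. k \<ge> n \<and> k \<ge> -1}"

definition Fb :: "int \<Rightarrow> (basis \<Rightarrow> 'k::field) set" where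
  "Fb n = lin_span ({e (U k) | k. k \<ge> n \<and> k \<ge> -1} \<union> {e (V k) | k. k \<ge> n \<and> k \<ge> -1})"

end

theory Submission
  imports Defs
begin

lemma e_inj: "inj (e :: basis \<Rightarrow> basis \<Rightarrow> 'k::field)"
proof
  fix a b :: basis assume "(e a :: basis \<Rightarrow> 'k) = e b"
  then have "(e a :: basis \<Rightarrow> 'k) a = e b a" by simp
  then show "a = b" by (auto simp: e_def split: if_splits)
qed

lemma lin_span_char:
  "(lin_span {e b | b. P b} :: (basis \<Rightarrow> 'k::field) set) = {x. finite (supp x) \<and> supp x \<subseteq> Collect P}"
proof (intro set_eqI iffI)
  fix x :: "basis \<Rightarrow> 'k"
  assume "x \<in> lin_span {e b | b. P b}"
  then obtain A c where A: "finite A" "A \<subseteq> {e b | b. P b}" and x: "x = (\<lambda>b. \<Sum>a\<in>A. c a * a b)"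
    unfolding lin_span_def by blast
  have s: "supp x \<subseteq> {b. e b \<in> A \<and> P b}"
  proof
    fix b assume "b \<in> supp x"
    then have "(\<Sum>a\<in>A. c a * a b) \<noteq> 0" using x by (simp add: supp_def)
    then obtain a where "a \<in> A" "c a * a b \<noteq> 0" by (meson sum.neutral)
    moreover then obtain b' where "a = e b'" "P b'" using A by blast
    ultimately show "b \<in> {b. e b \<in> A \<and> P b}" by (auto simp: e_def split: if_splits)
  qed
  have "finite {b. e b \<in> A}"
    using finite_vimageI[OF A(1) e_inj] by (simp add: vimage_def)
  then have "finite (supp x)" by (rule rev_finite_subset) (use s in blast)
  then show "x \<in> {x. finite (supp x) \<and> supp x \<subseteq> Collect P}" using s by auto
next
  fix x :: "basis \<Rightarrow> 'k"
  assume "x \<in> {x. finite (supp x) \<and> supp x \<subseteq> Collect P}"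
  then have f: "finite (supp x)" and sP: "supp x \<subseteq> Collect P" by auto
  let ?A = "e ` supp x"
  let ?c = "\<lambda>a. x (inv e a)"
  have xeq: "x = (\<lambda>b. \<Sum>a\<in>?A. ?c a * a b)"
  proof
    fix b
    have "(\<Sum>a\<in>?A. ?c a * a b) = (\<Sum>b'\<in>supp x. x b' * e b' b)"
      using e_inj by (subst sum.reindex) (auto intro: inj_on_subset)
    also have "\<dots> = (\<Sum>b'\<in>supp x. if b' = b then x b' else 0)"
      by (intro sum.cong) (auto simp: e_def)
    also have "\<dots> = x b" using f by (simp add: supp_def)
    finally show "x b = (\<Sum>a\<in>?A. ?c a * a b)" by simp
  qed
  have Asub: "?A \<subseteq> {e b | b. P b}" using sP by blast
  show "x \<in> lin_span {e b | b. P b}" unfolding lin_span_def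
    apply (rule CollectI)
    apply (rule exI[of _ ?A])
    apply (rule exI[of _ ?c])
    using f Asub xeq by blast
qed

fun idx :: "basis \<Rightarrow> int" where "idx (U k) = k" | "idx (V k) = k"

lemma sc_nz:
  assumes "(sc a b c :: 'k::field) \<noteq> 0"
  shows "(\<exists>i j. a = U i \<and> b = U j \<and> (c = U (i+j+2) \<or> (c = U (i+j) \<and> i \<noteq> j)))
       \<or> (\<exists>i j. a = U i \<and> b = V j \<and> (c = V (i+j+2) \<or> (c = V (i+j) \<and> i \<noteq> j)))
       \<or> (\<exists>i j. a = V i \<and> b = U j \<and> (c = V (i+j+2) \<or> (c = V (i+j) \<and> i \<noteq> j)))"
  using assms
  by (cases a; cases b) (auto simp: uu_def vv_def e_def Let_def split: if_splits)

lemma sc_supp: "{c. (sc a b c :: 'k::field) \<noteq> 0} \<subseteq>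
   {U (idx a + idx b + 2), U (idx a + idx b), V (idx a + idx b + 2), V (idx a + idx b)}"
  using sc_nz[of a b] by fastforce

lemma brk_span:
  assumes x: "x \<in> (lin_span {e b | b. P b} :: (basis \<Rightarrow> 'k::field) set)"
    and y: "y \<in> lin_span {e b | b. Q b}"
    and H: "\<And>a b c. P a \<Longrightarrow> Q b \<Longrightarrow> (sc a b c :: 'k) \<noteq> 0 \<Longrightarrow> R c"
  shows "brk x y \<in> lin_span {e b | b. R b}"
proof -
  have fx: "finite (supp x)" "supp x \<subseteq> Collect P" using x by (auto simp: lin_span_char)
  have fy: "finite (supp y)" "supp y \<subseteq> Collect Q" using y by (auto simp: lin_span_char)
  have s: "supp (brk x y) \<subseteq> (\<Union>a\<in>supp x. \<Union>b\<in>supp y. {c. sc a b c \<noteq> (0::'k)})"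
  proof
    fix c assume "c \<in> supp (brk x y)"
    then have "(\<Sum>a\<in>supp x. \<Sum>b\<in>supp y. x a * y b * sc a b c) \<noteq> 0"
      by (simp add: supp_def brk_def)
    then obtain a where a: "a \<in> supp x" "(\<Sum>b\<in>supp y. x a * y b * sc a b c) \<noteq> 0"
      by (meson sum.neutral)
    then obtain b where b: "b \<in> supp y" "x a * y b * sc a b c \<noteq> 0"
      by (meson sum.neutral)
    then show "c \<in> (\<Union>a\<in>supp x. \<Union>b\<in>supp y. {c. sc a b c \<noteq> (0::'k)})"
      using a by auto
  qed
  have fin: "finite (\<Union>a\<in>supp x. \<Union>b\<in>supp y. {c. sc a b c \<noteq> (0::'k)})"
    using fx fy by (auto intro: rev_finite_subset[OF _ sc_supp])
  have "supp (brk x y) \<subseteq> Collect R"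
    using s fx fy H by blast
  then show ?thesis using rev_finite_subset[OF fin s] by (simp add: lin_span_char)
qed

lemma FO_eq: "FO n = lin_span {e b | b. \<exists>k. b = U k \<and> k \<ge> n \<and> k \<ge> -1}"
  unfolding FO_def by (rule arg_cong[where f=lin_span]) blast
lemma FP_eq: "FP n = lin_span {e b | b. \<exists>k. b = V k \<and> k \<ge> n \<and> k \<ge> -1}"
  unfolding FP_def by (rule arg_cong[where f=lin_span]) blast
lemma Fb_eq: "Fb n = lin_span {e b | b. idx b \<ge> n \<and> idx b \<ge> -1}"
  unfolding Fb_def
  apply (rule arg_cong[where f=lin_span])
  apply (auto)
  apply (case_tac b; auto)
  done
lemma bcca_eq: "bcca = lin_span {e b | b. idx b \<ge> -1}"
  unfolding bcca_def
  apply (rule arg_cong[where f=lin_span])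
  apply (auto simp: valid_def split: basis.splits)
  apply (case_tac b; auto)+
  done

theorem proposition5p2:
  shows "(\<forall>n m. \<forall>x\<in>(FO n :: (basis \<Rightarrow> 'k::field_char_0) set). \<forall>y\<in>FP m. brk x y \<in> FP (n + m))
       \<and> (\<forall>n m. \<forall>x\<in>(Fb n :: (basis \<Rightarrow> 'k::field_char_0) set). \<forall>y\<in>Fb m. brk x y \<in> Fb (n + m))
       \<and> (bcca :: (basis \<Rightarrow> 'k::field_char_0) set) = Fb (-1)
       \<and> (\<forall>n\<ge>-1. (Fb (n + 1) :: (basis \<Rightarrow> 'k::field_char_0) set) \<subseteq> Fb n)"
proof (intro conjI allI ballI impI)
  fix n m and x y :: "basis \<Rightarrow> 'k"
  assume "x \<in> FO n" "y \<in> FP m"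
  then show "brk x y \<in> FP (n + m)"
    unfolding FO_eq FP_eq
    by (rule brk_span) (drule sc_nz, auto)
next
  fix n m and x y :: "basis \<Rightarrow> 'k"
  assume "x \<in> Fb n" "y \<in> Fb m"
  then show "brk x y \<in> Fb (n + m)"
    unfolding Fb_eq
    by (rule brk_span) (drule sc_nz, auto)
next
  show "(bcca :: (basis \<Rightarrow> 'k::field_char_0) set) = Fb (-1)"
    unfolding bcca_eq Fb_eq by simp
next
  fix n :: int
  show "(Fb (n + 1) :: (basis \<Rightarrow> 'k::field_char_0) set) \<subseteq> Fb n"
    unfolding Fb_eq lin_span_char by auto
qed

end
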